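(* Let $\mathbf{U},\mathbf{V}$ be $D\times D$ unimodular matrices and $\bm{\Lambda}_1,\dots,\bm{\Lambda}_L$ nonsingular diagonal integer matrices, and let $\mathbf{M}_i=\mathbf{U}\bm{\Lambda}_i\mathbf{V}$. Let $\bm{\Lambda}=\mathrm{diag}(\Lambda(1,1),\dots,\Lambda(D,D))$ where $\Lambda(j,j)$ is the (positive) lcm of the integers $\Lambda_1(j,j),\dots,\Lambda_L(j,j)$. Then for every unimodular $\mathbf{B}$, $\mathbf{R}=\mathbf{U}\bm{\Lambda}\mathbf{B}$ is an lcrm of $\mathbf{M}_1,\dots,\mathbf{M}_L$, and every $\mathbf{m}\in\mathcal{N}(\mathbf{R})$ is uniquely determined by its remainders $\mathbf{r}_i=\langle\mathbf{m}\rangle_{\mathbf{M}_i}$. Furthermore, when $\mathbf{B}=\mathbf{I}$, setting $\mathbf{a}=\mathbf{U}^{-1}\mathbf{m}$ and $\bm{\zeta}_i=\langle\mathbf{U}^{-1}\mathbf{r}_i\rangle_{\bm{\Lambda}_i}$, each component $a(j)$ satisfies $0\le a(j)<\Lambda(j,j)$ and is the unique integer in this range with $a(j)\equiv\zeta_i(j)\pmod{|\Lambda_i(j,j)|}$ for all $1\le i\le L$.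
   Context: Unimodular means integer with determinant $\pm1$. An lcrm of integer matrices $\mathbf{M}_1,\dots,\mathbf{M}_L$ is a nonsingular integer $\mathbf{R}=\mathbf{M}_i\mathbf{P}_i$ (integer $\mathbf{P}_i$, all $i$) such that every such common right multiple equals $\mathbf{R}\mathbf{A}$ for integer $\mathbf{A}$. $\mathcal{N}(\mathbf{M})=\{\mathbf{k}\in\mathbb{Z}^D:\mathbf{k}=\mathbf{M}\mathbf{x},\ \mathbf{x}\in[0,1)^D\}$; $\langle\mathbf{m}\rangle_{\mathbf{M}}$ is the unique $\mathbf{r}\in\mathcal{N}(\mathbf{M})$ with $\mathbf{m}-\mathbf{r}\in\mathbf{M}\mathbb{Z}^D$. $a(j)$, $\zeta_i(j)$ denote $j$-th components, $\Lambda_i(j,j)$ the $j$-th diagonal entry. *)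

theory Defs
  imports "HOL-Analysis.Analysis" "HOL-Number_Theory.Number_Theory"
begin

text \<open>Integer D x D matrices are rendered as int^'n^'n with 'n a finite index type (D = CARD('n)).\<close>

definition unimodular :: "int^'n^'n \<Rightarrow> bool" where
  "unimodular A \<longleftrightarrow> det A = 1 \<or> det A = -1"

definition nonsingular :: "int^'n^'n \<Rightarrow> bool" where
  "nonsingular A \<longleftrightarrow> det A \<noteq> 0"

definition diag_mat :: "int^'n^'n \<Rightarrow> bool" where
  "diag_mat A \<longleftrightarrow> (\<forall>i j. i \<noteq> j \<longrightarrow> A $ i $ j = 0)"

definition diag_of :: "('n \<Rightarrow> int) \<Rightarrow> int^'n^'n" where
  "diag_of d = (\<chi> i j. if i = j then d i else 0)"

definition is_lcrm :: "int^'n^'n \<Rightarrow> (nat \<Rightarrow> int^'n^'n) \<Rightarrow> nat set \<Rightarrow> bool" where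
  "is_lcrm R M I \<longleftrightarrow>
     nonsingular R \<and> (\<forall>i\<in>I. \<exists>P. R = M i ** P) \<and>
     (\<forall>C. nonsingular C \<and> (\<forall>i\<in>I. \<exists>P. C = M i ** P) \<longrightarrow> (\<exists>A. C = R ** A))"

definition real_mat :: "int^'n^'m \<Rightarrow> real^'n^'m" where
  "real_mat M = (\<chi> i j. real_of_int (M $ i $ j))"

definition real_vec :: "int^'n \<Rightarrow> real^'n" where
  "real_vec v = (\<chi> i. real_of_int (v $ i))"

definition Nset :: "int^'n^'n \<Rightarrow> (int^'n) set" where
  "Nset M = {k. \<exists>x::real^'n. (\<forall>j. 0 \<le> x $ j \<and> x $ j < 1) \<and> real_vec k = real_mat M *v x}"

definition remM :: "int^'n^'n \<Rightarrow> int^'n \<Rightarrow> int^'n" where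
  "remM M m = (THE r. r \<in> Nset M \<and> (\<exists>y. m - r = M *v y))"

end

theory Submission imports Defs begin

lemma real_mat_inj: "real_mat A = real_mat B \<Longrightarrow> A = B"
  by (auto simp: real_mat_def vec_eq_iff)

lemma real_vec_inj: "real_vec a = real_vec b \<Longrightarrow> a = b"
  by (auto simp: real_vec_def vec_eq_iff)

lemma real_mat_mult: "real_mat (A ** B) = real_mat A ** real_mat B"
  by (simp add: real_mat_def matrix_matrix_mult_def vec_eq_iff)

lemma real_vec_mult: "real_vec (A *v x) = real_mat A *v real_vec x"
  by (simp add: real_mat_def real_vec_def matrix_vector_mult_def vec_eq_iff)

lemma real_vec_diff: "real_vec (a - b) = real_vec a - real_vec b"
  by (simp add: real_vec_def vec_eq_iff)

lemma real_mat_1: "real_mat (mat 1) = mat 1"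
  by (simp add: real_mat_def mat_def vec_eq_iff)

lemma det_real_mat: "det (real_mat A) = real_of_int (det A)"
  by (simp add: det_def real_mat_def)


lemma matrix_inv_real:
  fixes A :: "real^'n^'n"
  assumes "det A \<noteq> 0"
  shows "A ** matrix_inv A = mat 1" "matrix_inv A ** A = mat 1"
proof -
  have "invertible A" using assms invertible_det_nz by blast
  then have "\<exists>A'. A ** A' = mat 1 \<and> A' ** A = mat 1" by (simp add: invertible_def)
  from someI_ex[OF this] show "A ** matrix_inv A = mat 1" "matrix_inv A ** A = mat 1"
    by (simp_all add: matrix_inv_def)
qed

lemma matrix_inv_unique:
  fixes A B :: "'a::comm_ring_1^'n^'n"
  assumes "A ** B = mat 1" "B ** A = mat 1"
  shows "matrix_inv A = B"
  unfolding matrix_inv_def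
proof (rule some_equality)
  show "A ** B = mat 1 \<and> B ** A = mat 1" using assms by simp
  fix A' assume "A ** A' = mat 1 \<and> A' ** A = mat 1"
  then have "A' = A' ** (A ** B)" "A' ** A = mat 1" by (simp_all add: assms)
  then show "A' = B" by (simp add: matrix_mul_assoc)
qed

lemma unimod_inv:
  fixes U :: "int^'n^'n"
  assumes "unimodular U"
  obtains Ui where "U ** Ui = mat 1" "Ui ** U = mat 1"
proof -
  let ?Ur = "real_mat U"
  have dU: "det U = 1 \<or> det U = -1" using assms unimodular_def by blast
  have dr: "det ?Ur = real_of_int (det U)" by (rule det_real_mat)
  have dnz: "det ?Ur \<noteq> 0" using dU dr by auto
  define Bm where "Bm = matrix_inv ?Ur"
  have B1: "?Ur ** Bm = mat 1" "Bm ** ?Ur = mat 1" using matrix_inv_real[OF dnz] Bm_def by auto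
  define Ui :: "int^'n^'n" where "Ui = (\<chi> k l. det U * det (\<chi> i j. if j = k then (if i = l then 1 else 0) else U$i$j))"
  have "real_mat Ui = Bm"
  proof -
    { fix k l
      have "?Ur *v (Bm *v axis l 1) = axis l 1"
        by (simp add: matrix_vector_mul_assoc B1)
      then have "Bm *v axis l 1 = (\<chi> k. det(\<chi> i j. if j=k then (axis l 1 :: real^'n)$i else ?Ur$i$j) / det ?Ur)"
        using cramer[OF dnz] by blast
      then have e: "Bm $ k $ l = det(\<chi> i j. if j=k then (axis l 1 :: real^'n)$i else ?Ur$i$j) / det ?Ur"
        by (simp add: matrix_vector_mult_basis column_def) (metis (no_types, lifting))
      have "(\<chi> i j. if j=k then (axis l 1 :: real^'n)$i else ?Ur$i$j) =
            real_mat (\<chi> i j. if j = k then (if i = l then 1 else 0) else U$i$j)"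
        by (simp add: real_mat_def vec_eq_iff axis_def)
      then have "Bm $ k $ l = real_of_int (det (\<chi> i j. if j = k then (if i = l then 1 else 0) else U$i$j)) / real_of_int (det U)"
        using e dr by (simp add: det_real_mat)
      also have "\<dots> = real_of_int (Ui $ k $ l)"
        using dU by (auto simp: Ui_def)
      finally have "real_mat Ui $ k $ l = Bm $ k $ l" by (simp add: real_mat_def)
    }
    then show ?thesis by (simp add: vec_eq_iff)
  qed
  then have "U ** Ui = mat 1" "Ui ** U = mat 1"
    using B1 by (auto intro!: real_mat_inj simp: real_mat_mult real_mat_1)
  then show ?thesis using that by blast
qed

lemma Nset_uniq:
  assumes R: "nonsingular R" and r: "r \<in> Nset R" and r': "r' \<in> Nset R" and d: "r - r' = R *v y"
  shows "r = r'"
proof -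
  obtain x where x: "\<forall>j. 0 \<le> x $ j \<and> x $ j < 1" "real_vec r = real_mat R *v x"
    using r by (auto simp: Nset_def)
  obtain x' where x': "\<forall>j. 0 \<le> x' $ j \<and> x' $ j < 1" "real_vec r' = real_mat R *v x'"
    using r' by (auto simp: Nset_def)
  have dnz: "det (real_mat R) \<noteq> 0" using R by (simp add: nonsingular_def det_real_mat)
  have "real_mat R *v (x - x') = real_mat R *v real_vec y"
    using d x x' by (metis matrix_vector_mult_diff_distrib real_vec_diff real_vec_mult)
  then have "x - x' = real_vec y"
    using inj_matrix_vector_mult[of "real_mat R"] dnz invertible_det_nz by (auto dest: injD)
  then have "\<forall>j. y $ j = 0"
  proof (intro allI)
    fix j assume "x - x' = real_vec y"
    then have "real_of_int (y $ j) = x $ j - x' $ j" by (simp add: real_vec_def vec_eq_iff)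
    moreover have "x $ j - x' $ j < 1" "x $ j - x' $ j > -1" using x(1) x'(1) by (smt (verit))+
    ultimately show "y $ j = 0" by linarith
  qed
  then have "y = 0" by (simp add: vec_eq_iff)
  then show ?thesis using d by simp
qed

lemma Nset_ex:
  assumes R: "nonsingular R"
  shows "\<exists>r. r \<in> Nset R \<and> (\<exists>y. m - r = R *v y)"
proof -
  have dnz: "det (real_mat R) \<noteq> 0" using R by (simp add: nonsingular_def det_real_mat)
  define x where "x = matrix_inv (real_mat R) *v real_vec m"
  define y :: "int^'a" where "y = (\<chi> j. floor (x$j))"
  define r where "r = m - R *v y"
  have rx: "real_mat R *v x = real_vec m"
    using matrix_inv_real[OF dnz] by (simp add: x_def matrix_vector_mul_assoc)
  have "real_vec r = real_mat R *v (x - real_vec y)"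
    by (simp add: r_def real_vec_diff real_vec_mult rx matrix_vector_mult_diff_distrib)
  moreover have "x - real_vec y = (\<chi> j. frac (x $ j))"
    by (simp add: y_def real_vec_def vec_eq_iff frac_def)
  ultimately have "r \<in> Nset R"
    unfolding Nset_def by (auto intro!: exI[of _ "x - real_vec y"] simp: frac_lt_1)
  moreover have "m - r = R *v y" by (simp add: r_def)
  ultimately show ?thesis by blast
qed

lemma remM:
  assumes R: "nonsingular R"
  shows "remM R m \<in> Nset R \<and> (\<exists>y. m - remM R m = R *v y)"
proof -
  have "\<exists>!r. r \<in> Nset R \<and> (\<exists>y. m - r = R *v y)"
  proof (rule ex_ex1I)
    show "\<exists>r. r \<in> Nset R \<and> (\<exists>y. m - r = R *v y)" using Nset_ex[OF R] .
    fix r r' assume a: "r \<in> Nset R \<and> (\<exists>y. m - r = R *v y)" "r' \<in> Nset R \<and> (\<exists>y. m - r' = R *v y)"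
    then obtain y y' where "m - r = R *v y" "m - r' = R *v y'" by blast
    then have "r - r' = R *v (y' - y)" by (simp add: matrix_vector_mult_diff_distrib algebra_simps)
    then show "r = r'" using Nset_uniq[OF R] a by blast
  qed
  from theI'[OF this] show ?thesis unfolding remM_def .
qed


lemma diag_mv: "diag_mat A \<Longrightarrow> (A *v y) $ j = A$j$j * y$j"
proof -
  assume d: "diag_mat A"
  have "(\<Sum>i\<in>UNIV. A$j$i * y$i) = (\<Sum>i\<in>UNIV. if i = j then A$j$j * y$j else 0)"
    by (rule sum.cong) (use d in \<open>auto simp: diag_mat_def\<close>)
  then show ?thesis by (simp add: matrix_vector_mult_def)
qed

lemma diag_mm: "diag_mat A \<Longrightarrow> (A ** B) $ j $ k = A$j$j * B$j$k"
proof -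
  assume d: "diag_mat A"
  have "(\<Sum>i\<in>UNIV. A$j$i * B$i$k) = (\<Sum>i\<in>UNIV. if i = j then A$j$j * B$j$k else 0)"
    by (rule sum.cong) (use d in \<open>auto simp: diag_mat_def\<close>)
  then show ?thesis by (simp add: matrix_matrix_mult_def)
qed

lemma diag_of_diag: "diag_mat (diag_of d)" "diag_of d $ j $ j = d j"
  by (auto simp: diag_mat_def diag_of_def)

lemma diag_nz: "diag_mat A \<Longrightarrow> nonsingular A \<Longrightarrow> A$j$j \<noteq> 0"
  by (auto simp: nonsingular_def det_diagonal diag_mat_def)

lemma real_diag_mv: "(real_mat (diag_of d) *v x) $ j = real_of_int (d j) * x $ j"
proof -
  have "(\<Sum>i\<in>UNIV. real_mat (diag_of d)$j$i * x$i) = (\<Sum>i\<in>UNIV. if i = j then real_of_int (d j) * x$j else 0)"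
    by (rule sum.cong) (auto simp: diag_of_def real_mat_def)
  then show ?thesis by (simp add: matrix_vector_mult_def)
qed

lemma lcm_vec:
  assumes D: "\<And>i. i \<in> I \<Longrightarrow> diag_mat (Lam i)" and W: "\<And>i. i \<in> I \<Longrightarrow> \<exists>y. w = Lam i *v y"
  shows "\<exists>z. w = diag_of (\<lambda>j. Lcm ((\<lambda>i. Lam i $ j $ j) ` I)) *v z"
proof -
  let ?l = "\<lambda>j. Lcm ((\<lambda>i. Lam i $ j $ j) ` I)"
  have dv: "?l j dvd w $ j" for j
  proof (rule Lcm_least)
    fix a assume "a \<in> (\<lambda>i. Lam i $ j $ j) ` I"
    then obtain i where i: "i \<in> I" "a = Lam i $ j $ j" by blast
    obtain y where "w = Lam i *v y" using W[OF i(1)] by blast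
    then have "w $ j = Lam i $ j $ j * y $ j" using diag_mv[OF D[OF i(1)]] by simp
    then show "a dvd w $ j" using i by simp
  qed
  show ?thesis
    by (rule exI[of _ "\<chi> j. w $ j div ?l j"])
       (simp add: vec_eq_iff diag_mv diag_of_diag dv)
qed

lemma lcm_mat:
  assumes D: "\<And>i. i \<in> I \<Longrightarrow> diag_mat (Lam i)" and W: "\<And>i. i \<in> I \<Longrightarrow> \<exists>P. C = Lam i ** P"
  shows "\<exists>Q. C = diag_of (\<lambda>j. Lcm ((\<lambda>i. Lam i $ j $ j) ` I)) ** Q"
proof -
  let ?l = "\<lambda>j. Lcm ((\<lambda>i. Lam i $ j $ j) ` I)"
  have dv: "?l j dvd C $ j $ k" for j k
  proof (rule Lcm_least)
    fix a assume "a \<in> (\<lambda>i. Lam i $ j $ j) ` I"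
    then obtain i where i: "i \<in> I" "a = Lam i $ j $ j" by blast
    obtain P where "C = Lam i ** P" using W[OF i(1)] by blast
    then have "C $ j $ k = Lam i $ j $ j * P $ j $ k" using diag_mm[OF D[OF i(1)]] by simp
    then show "a dvd C $ j $ k" using i by simp
  qed
  show ?thesis
    by (rule exI[of _ "\<chi> j k. C $ j $ k div ?l j"])
       (simp add: vec_eq_iff diag_mm diag_of_diag dv)
qed

lemma mod_unique_int:
  fixes t a l :: int
  assumes "l dvd t - a" "0 \<le> t" "t < l" "0 \<le> a" "a < l"
  shows "t = a"
proof -
  have "t mod l = a mod l" using assms(1) by (simp add: mod_eq_dvd_iff)
  then show ?thesis using assms by simp
qed


theorem corollary4:
  fixes U V :: "int^'n^'n"
    and Lam :: "nat \<Rightarrow> int^'n^'n"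
    and M :: "nat \<Rightarrow> int^'n^'n"
    and L :: nat
    and LamL :: "int^'n^'n"
  assumes L1: "L \<ge> 1"
    and U: "unimodular U" and V: "unimodular V"
    and Lam: "\<And>i. i \<in> {1..L} \<Longrightarrow> diag_mat (Lam i) \<and> nonsingular (Lam i)"
    and M: "\<And>i. i \<in> {1..L} \<Longrightarrow> M i = U ** Lam i ** V"
    and LamL: "LamL = diag_of (\<lambda>j. Lcm ((\<lambda>i. Lam i $ j $ j) ` {1..L}))"
  shows "(\<forall>B. unimodular B \<longrightarrow>
            is_lcrm (U ** LamL ** B) M {1..L} \<and>
            (\<forall>m\<in>Nset (U ** LamL ** B). \<forall>m'\<in>Nset (U ** LamL ** B).
               (\<forall>i\<in>{1..L}. remM (M i) m = remM (M i) m') \<longrightarrow> m = m'))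
       \<and> (\<forall>m\<in>Nset (U ** LamL).
            let a = matrix_inv U *v m;
                \<zeta> = (\<lambda>i. remM (Lam i) (matrix_inv U *v remM (M i) m))
            in \<forall>j. 0 \<le> a $ j \<and> a $ j < LamL $ j $ j \<and>
                   (\<forall>t::int. (0 \<le> t \<and> t < LamL $ j $ j \<and>
                       (\<forall>i\<in>{1..L}. [t = \<zeta> i $ j] (mod \<bar>Lam i $ j $ j\<bar>)))
                     \<longleftrightarrow> t = a $ j))"
proof -
  obtain Ui where Ui: "U ** Ui = mat 1" "Ui ** U = mat 1" using unimod_inv[OF U] by blast
  obtain Vi where Vi: "V ** Vi = mat 1" "Vi ** V = mat 1" using unimod_inv[OF V] by blast
  have invU: "matrix_inv U = Ui" using matrix_inv_unique[OF Ui] .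
  define l where "l = (\<lambda>j. Lcm ((\<lambda>i. Lam i $ j $ j) ` {1..L}))"
  have LamL': "LamL = diag_of l" using LamL l_def by simp
  have Ld: "diag_mat (Lam i)" "nonsingular (Lam i)" if "i \<in> {1..L}" for i using Lam[OF that] by auto
  have dnz: "Lam i $ j $ j \<noteq> 0" if "i \<in> {1..L}" for i j using diag_nz Ld[OF that] by blast
  have lpos: "l j > 0" for j
  proof -
    have "l j \<noteq> 0" unfolding l_def using Lcm_0_iff[of "(\<lambda>i. Lam i $ j $ j) ` {1..L}"] dnz by auto
    moreover have "l j \<ge> 0" unfolding l_def by simp
    ultimately show ?thesis by simp
  qed
  have ddvd: "Lam i $ j $ j dvd l j" if "i \<in> {1..L}" for i j
    unfolding l_def using that by (intro dvd_Lcm) auto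
  have LLjj: "LamL $ j $ j = l j" for j by (simp add: LamL' diag_of_diag)
  have detU: "det U \<noteq> 0" "det V \<noteq> 0" using U V by (auto simp: unimodular_def)
  have detLL: "det LamL \<noteq> 0"
    using lpos by (simp add: LamL' det_diagonal diag_of_def) (metis less_irrefl)
  have Mns: "nonsingular (M i)" if "i \<in> {1..L}" for i
    using Ld[OF that] detU by (simp add: M[OF that] nonsingular_def det_mul)
  have key: "\<exists>z. w = LamL *v z" if "\<And>i. i \<in> {1..L} \<Longrightarrow> \<exists>y. w = Lam i *v y" for w
    using lcm_vec[of "{1..L}" Lam w] Ld that LamL by blast
  have part1: "is_lcrm (U ** LamL ** B) M {1..L} \<and>
            (\<forall>m\<in>Nset (U ** LamL ** B). \<forall>m'\<in>Nset (U ** LamL ** B).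
               (\<forall>i\<in>{1..L}. remM (M i) m = remM (M i) m') \<longrightarrow> m = m')"
    if B: "unimodular B" for B
  proof -
    obtain Bi where Bi: "B ** Bi = mat 1" "Bi ** B = mat 1" using unimod_inv[OF B] by blast
    let ?R = "U ** LamL ** B"
    have Rns: "nonsingular ?R"
      using detU detLL B by (auto simp: nonsingular_def det_mul unimodular_def)
    have mult: "\<exists>P. ?R = M i ** P" if i: "i \<in> {1..L}" for i
    proof -
      define Di where "Di = diag_of (\<lambda>j. l j div Lam i $ j $ j)"
      have LD: "Lam i ** Di = LamL"
        unfolding vec_eq_iff
      proof (intro allI)
        fix j k
        show "(Lam i ** Di) $ j $ k = LamL $ j $ k"
          using ddvd[OF i, of j] by (auto simp: diag_mm[OF Ld(1)[OF i]] Di_def LamL' diag_of_def)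
      qed
      have "M i ** (Vi ** Di ** B) = U ** Lam i ** (V ** Vi) ** Di ** B"
        by (simp add: M[OF i] matrix_mul_assoc)
      also have "\<dots> = U ** (Lam i ** Di) ** B" by (simp add: Vi matrix_mul_assoc)
      finally show ?thesis using LD by metis
    qed
    have least: "\<exists>A. C = ?R ** A" if C: "\<forall>i\<in>{1..L}. \<exists>P. C = M i ** P" for C
    proof -
      have "\<exists>P. Ui ** C = Lam i ** P" if i: "i \<in> {1..L}" for i
      proof -
        obtain P where P: "C = M i ** P" using C i by blast
        have "Ui ** C = (Ui ** U) ** Lam i ** (V ** P)" by (simp add: P M[OF i] matrix_mul_assoc)
        then show ?thesis by (auto simp: Ui)
      qed
      then obtain Q where Q: "Ui ** C = LamL ** Q"
        using lcm_mat[of "{1..L}" Lam "Ui ** C"] Ld LamL by blast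
      have "C = U ** (Ui ** C)" by (simp add: matrix_mul_assoc Ui)
      also have "\<dots> = U ** LamL ** (B ** Bi) ** Q" by (simp add: Q Bi matrix_mul_assoc)
      also have "\<dots> = ?R ** (Bi ** Q)" by (simp add: matrix_mul_assoc)
      finally show ?thesis by blast
    qed
    have uniq: "m = m'" if m: "m \<in> Nset ?R" "m' \<in> Nset ?R" and eq: "\<forall>i\<in>{1..L}. remM (M i) m = remM (M i) m'" for m m'
    proof -
      have "\<exists>y. Ui *v (m - m') = Lam i *v y" if i: "i \<in> {1..L}" for i
      proof -
        obtain y where y: "m - remM (M i) m = M i *v y" using remM[OF Mns[OF i]] by blast
        obtain y' where y': "m' - remM (M i) m' = M i *v y'" using remM[OF Mns[OF i]] by blast
        have "m - m' = M i *v (y - y')" using y y' eq i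
          by (simp add: matrix_vector_mult_diff_distrib algebra_simps)
        then have "Ui *v (m - m') = (Ui ** U) *v (Lam i *v (V *v (y - y')))"
          by (simp add: M[OF i] matrix_vector_mul_assoc matrix_mul_assoc)
        then show ?thesis by (auto simp: Ui)
      qed
      then obtain z where z: "Ui *v (m - m') = LamL *v z" using key by blast
      have "m - m' = U *v (Ui *v (m - m'))" by (simp add: matrix_vector_mul_assoc Ui)
      also have "\<dots> = (U ** LamL ** (B ** Bi)) *v z" by (simp add: z Bi matrix_vector_mul_assoc)
      also have "\<dots> = ?R *v (Bi *v z)" by (simp add: matrix_mul_assoc matrix_vector_mul_assoc)
      finally show ?thesis using Nset_uniq[OF Rns m] by blast
    qed
    show ?thesis using Rns mult least uniq unfolding is_lcrm_def by blast
  qed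
  have part2: "0 \<le> (Ui *v m) $ j \<and> (Ui *v m) $ j < l j \<and>
       (\<forall>t::int. (0 \<le> t \<and> t < l j \<and>
           (\<forall>i\<in>{1..L}. [t = remM (Lam i) (Ui *v remM (M i) m) $ j] (mod \<bar>Lam i $ j $ j\<bar>)))
         \<longleftrightarrow> t = (Ui *v m) $ j)"
    if m: "m \<in> Nset (U ** LamL)" for m j
  proof -
    let ?a = "Ui *v m"
    obtain x where x: "\<forall>j. 0 \<le> x $ j \<and> x $ j < 1" "real_vec m = real_mat (U ** LamL) *v x"
      using m by (auto simp: Nset_def)
    have "real_vec ?a = real_mat ((Ui ** U) ** LamL) *v x"
      by (simp add: real_vec_mult x real_mat_mult matrix_vector_mul_assoc matrix_mul_assoc)
    then have "real_vec ?a = real_mat LamL *v x" by (simp add: Ui)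
    then have aj: "real_of_int (?a $ j) = real_of_int (l j) * x $ j"
      by (metis LamL' real_diag_mv real_vec_def vec_lambda_beta)
    have lj: "real_of_int (l j) > 0" using lpos by simp
    have "real_of_int (?a $ j) \<ge> 0" using aj x(1) lj by simp
    moreover have "real_of_int (?a $ j) < real_of_int (l j)"
      using aj x(1) lj by (simp add: mult_less_cancel_left1 [of _ "x$j", symmetric])
    ultimately have ab: "0 \<le> ?a $ j" "?a $ j < l j" by linarith+
    have cg: "Lam i $ j $ j dvd ?a $ j - remM (Lam i) (Ui *v remM (M i) m) $ j" if i: "i \<in> {1..L}" for i
    proof -
      obtain y where y: "m - remM (M i) m = M i *v y" using remM[OF Mns[OF i]] by blast
      obtain w where w: "Ui *v remM (M i) m - remM (Lam i) (Ui *v remM (M i) m) = Lam i *v w"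
        using remM[OF Ld(2)[OF i]] by blast
      have "Ui *v (m - remM (M i) m) = (Ui ** U) *v (Lam i *v (V *v y))"
        using y by (simp add: M[OF i] matrix_vector_mul_assoc matrix_mul_assoc)
      then have "?a - Ui *v remM (M i) m = Lam i *v (V *v y)"
        by (simp add: Ui matrix_vector_mult_diff_distrib)
      then have "?a - remM (Lam i) (Ui *v remM (M i) m) = Lam i *v (V *v y + w)"
        using w by (simp add: matrix_vector_right_distrib algebra_simps)
      then have "?a $ j - remM (Lam i) (Ui *v remM (M i) m) $ j = Lam i $ j $ j * (V *v y + w) $ j"
        by (metis diag_mv Ld(1)[OF i] vector_minus_component)
      then show ?thesis by simp
    qed
    have "(0 \<le> t \<and> t < l j \<and>
           (\<forall>i\<in>{1..L}. [t = remM (Lam i) (Ui *v remM (M i) m) $ j] (mod \<bar>Lam i $ j $ j\<bar>)))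
         \<longleftrightarrow> t = ?a $ j" for t
    proof
      assume h: "0 \<le> t \<and> t < l j \<and>
           (\<forall>i\<in>{1..L}. [t = remM (Lam i) (Ui *v remM (M i) m) $ j] (mod \<bar>Lam i $ j $ j\<bar>))"
      have "Lam i $ j $ j dvd t - ?a $ j" if i: "i \<in> {1..L}" for i
      proof -
        have "Lam i $ j $ j dvd t - remM (Lam i) (Ui *v remM (M i) m) $ j"
          using h i by (simp add: cong_iff_dvd_diff)
        from dvd_diff[OF this cg[OF i]] show ?thesis by simp
      qed
      then have "l j dvd t - ?a $ j" unfolding l_def by (intro Lcm_least) auto
      then show "t = ?a $ j" using mod_unique_int h ab by blast
    next
      assume "t = ?a $ j"
      then show "0 \<le> t \<and> t < l j \<and>
           (\<forall>i\<in>{1..L}. [t = remM (Lam i) (Ui *v remM (M i) m) $ j] (mod \<bar>Lam i $ j $ j\<bar>))"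
        using ab cg by (simp add: cong_iff_dvd_diff)
    qed
    then show ?thesis using ab by blast
  qed
  show ?thesis
    using part1 part2 by (simp add: Let_def invU LLjj)
qed

end
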